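(* Let $D$ be a squarefree integer and $p>3$ a prime not dividing $D$. Then the reductions modulo $p$ of the equations $X_0^2-2X_1^2+X_2^2=0$, $X_1^2-2X_2^2+DX_3^2=0$, $X_2^2-2DX_3^2+X_4^2=0$ define a smooth curve over $\mathbb{F}_p$; i.e. $C_D$ has good reduction at $p$ with these equations.
   Context: $C_D\subset\mathbb{P}^4$ is the curve over $\mathbb{Q}$ defined by these three equations. *)

theory Defs
  imports "HOL-Computational_Algebra.Computational_Algebra"
begin

text \<open>The three quadrics defining C_D in P^4, with integer coefficients interpreted
  in an arbitrary field K (i.e. reduced modulo CHAR(K)). A point is x :: nat \<Rightarrow> K,
  with homogeneous coordinates x 0, ..., x 4.\<close>

definition CD_F1 :: "int \<Rightarrow> (nat \<Rightarrow> 'k::field) \<Rightarrow> 'k" where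
  "CD_F1 D x = (x 0)^2 - 2 * (x 1)^2 + (x 2)^2"

definition CD_F2 :: "int \<Rightarrow> (nat \<Rightarrow> 'k::field) \<Rightarrow> 'k" where
  "CD_F2 D x = (x 1)^2 - 2 * (x 2)^2 + of_int D * (x 3)^2"

definition CD_F3 :: "int \<Rightarrow> (nat \<Rightarrow> 'k::field) \<Rightarrow> 'k" where
  "CD_F3 D x = (x 2)^2 - 2 * of_int D * (x 3)^2 + (x 4)^2"

definition CD_dF :: "nat \<Rightarrow> int \<Rightarrow> (nat \<Rightarrow> 'k::field) \<Rightarrow> nat \<Rightarrow> 'k" where
  "CD_dF j D x i =
     (if j = 1 then [2 * x 0, - 4 * x 1, 2 * x 2, 0, 0] ! i
      else if j = 2 then [0, 2 * x 1, - 4 * x 2, 2 * of_int D * x 3, 0] ! i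
      else [0, 0, 2 * x 2, - 4 * of_int D * x 3, 2 * x 4] ! i)"

definition on_CD :: "int \<Rightarrow> (nat \<Rightarrow> 'k::field) \<Rightarrow> bool" where
  "on_CD D x \<longleftrightarrow> (\<exists>i<5. x i \<noteq> 0) \<and> CD_F1 D x = 0 \<and> CD_F2 D x = 0 \<and> CD_F3 D x = 0"

definition CD_jacobian_rank3 :: "int \<Rightarrow> (nat \<Rightarrow> 'k::field) \<Rightarrow> bool" where
  "CD_jacobian_rank3 D x \<longleftrightarrow>
     (\<forall>a b c :: 'k. (\<forall>i<5. a * CD_dF 1 D x i + b * CD_dF 2 D x i + c * CD_dF 3 D x i = 0)
        \<longrightarrow> a = 0 \<and> b = 0 \<and> c = 0)"

end

theory Submission
  imports Defs
begin

lemma pairs_zero: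
  fixes y0 y1 y2 z y4 :: "'k::field"
  assumes two: "(2::'k) \<noteq> 0" and three: "(3::'k) \<noteq> 0"
    and e1: "y0 - 2*y1 + y2 = 0" and e2: "y1 - 2*y2 + z = 0" and e3: "y2 - 2*z + y4 = 0"
    and pr: "(y0 = 0 \<and> y1 = 0) \<or> (y0 = 0 \<and> y2 = 0) \<or> (y0 = 0 \<and> z = 0) \<or> (y0 = 0 \<and> y4 = 0)
      \<or> (y1 = 0 \<and> y2 = 0) \<or> (y1 = 0 \<and> z = 0) \<or> (y1 = 0 \<and> y4 = 0)
      \<or> (y2 = 0 \<and> z = 0) \<or> (y2 = 0 \<and> y4 = 0) \<or> (z = 0 \<and> y4 = 0)"
  shows "y0 = 0 \<and> y1 = 0 \<and> y2 = 0 \<and> z = 0 \<and> y4 = 0"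
proof -
  have y2: "y2 = 2*y1 - y0" using e1 by (simp add: algebra_simps)
  have z: "z = 3*y1 - 2*y0" using e2 y2 by (simp add: algebra_simps)
  have y4: "y4 = 4*y1 - 3*y0" using e3 y2 z by (simp add: algebra_simps)
  have four: "(4::'k) \<noteq> 0" using two by (metis mult_eq_0_iff numeral_Bit0_eq_double)
  have n34: "(3::'k) \<noteq> 4"
  proof
    assume h: "(3::'k) = 4"
    have "(1::'k) = 4 - 3" by simp
    also have "\<dots> = 0" using h by simp
    finally show False by simp
  qed
  have n46: "(4::'k) \<noteq> 6"
  proof
    assume h: "(4::'k) = 6"
    have "(2::'k) = 6 - 4" by simp
    also have "\<dots> = 0" using h by simp
    finally show False using two by simp
  qed
  have c5: "y0 = 0" if "y1 * 3 = y0 * 2" "y1 * 4 = y0 * 3"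
  proof -
    have "y1 * 12 = y0 * 8" using arg_cong[OF that(1), of "\<lambda>t. t*4"] by (simp add: mult.assoc)
    moreover have "y1 * 12 = y0 * 9" using arg_cong[OF that(2), of "\<lambda>t. t*3"] by (simp add: mult.assoc)
    ultimately have "y0 * 9 - y0 * 8 = 0" by (simp only: diff_self)
    moreover have "y0 * 9 - y0 * 8 = y0 * (9 - 8)" by (simp only: right_diff_distrib)
    moreover have "(9::'k) - 8 = 1" by simp
    ultimately show ?thesis by (simp only: mult_1_right)
  qed
  have "y0 = 0 \<and> y1 = 0"
    using pr
    apply (elim disjE conjE)
    using two three four n34 n46 c5 by (auto simp: y2 z y4 algebra_simps eq_neg_iff_add_eq_0)
  thus ?thesis using y2 z y4 by simp
qed

theorem lemma4p3:
  fixes D :: int and p :: nat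
  assumes "squarefree D" and "prime p" and "p > 3" and "\<not> int p dvd D"
    and "CHAR('k::field) = p"
  shows "\<forall>x :: nat \<Rightarrow> 'k. on_CD D x \<longrightarrow> CD_jacobian_rank3 D x"
proof (intro allI impI)
  fix x :: "nat \<Rightarrow> 'k"
  assume on: "on_CD D x"
  have two: "(2::'k) \<noteq> 0"
  proof
    assume "(2::'k) = 0" hence "of_nat 2 = (0::'k)" by simp
    hence "p dvd 2" using assms(5) of_nat_eq_0_iff_char_dvd by metis
    thus False using assms(3) by (simp add: nat_dvd_not_less dvd_imp_le)
  qed
  have three: "(3::'k) \<noteq> 0"
  proof
    assume "(3::'k) = 0" hence "of_nat 3 = (0::'k)" by simp
    hence "p dvd 3" using assms(5) of_nat_eq_0_iff_char_dvd by metis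
    thus False using assms(3) by (simp add: nat_dvd_not_less dvd_imp_le)
  qed
  have dD: "(of_int D :: 'k) \<noteq> 0"
    using assms(4,5) of_int_eq_0_iff_char_dvd by metis
  have nz: "\<exists>i<5. x i \<noteq> 0" and f1: "CD_F1 D x = 0" and f2: "CD_F2 D x = 0" and f3: "CD_F3 D x = 0"
    using on by (auto simp: on_CD_def)
  have e1: "(x 0)^2 - 2*(x 1)^2 + (x 2)^2 = 0" using f1 by (simp add: CD_F1_def)
  have e2: "(x 1)^2 - 2*(x 2)^2 + (of_int D * (x 3)^2) = 0" using f2 by (simp add: CD_F2_def)
  have e3: "(x 2)^2 - 2*(of_int D * (x 3)^2) + (x 4)^2 = 0" using f3 by (simp add: CD_F3_def mult.assoc)
  have notwo: "\<not> ((x 0 = 0 \<and> x 1 = 0) \<or> (x 0 = 0 \<and> x 2 = 0) \<or> (x 0 = 0 \<and> x 3 = 0) \<or> (x 0 = 0 \<and> x 4 = 0)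
      \<or> (x 1 = 0 \<and> x 2 = 0) \<or> (x 1 = 0 \<and> x 3 = 0) \<or> (x 1 = 0 \<and> x 4 = 0)
      \<or> (x 2 = 0 \<and> x 3 = 0) \<or> (x 2 = 0 \<and> x 4 = 0) \<or> (x 3 = 0 \<and> x 4 = 0))"
  proof
    assume h: "(x 0 = 0 \<and> x 1 = 0) \<or> (x 0 = 0 \<and> x 2 = 0) \<or> (x 0 = 0 \<and> x 3 = 0) \<or> (x 0 = 0 \<and> x 4 = 0)
      \<or> (x 1 = 0 \<and> x 2 = 0) \<or> (x 1 = 0 \<and> x 3 = 0) \<or> (x 1 = 0 \<and> x 4 = 0)
      \<or> (x 2 = 0 \<and> x 3 = 0) \<or> (x 2 = 0 \<and> x 4 = 0) \<or> (x 3 = 0 \<and> x 4 = 0)"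
    have "(x 0)^2 = 0 \<and> (x 1)^2 = 0 \<and> (x 2)^2 = 0 \<and> of_int D * (x 3)^2 = 0 \<and> (x 4)^2 = 0"
      apply (rule pairs_zero[OF two three e1 e2 e3])
      using h dD by auto
    hence "\<forall>i<5. x i = 0" using dD by (auto simp: less_Suc_eq numeral_eq_Suc)
    thus False using nz by blast
  qed
  show "CD_jacobian_rank3 D x"
    unfolding CD_jacobian_rank3_def
  proof (intro allI impI)
    fix a b c :: 'k
    assume h: "\<forall>i<5. a * CD_dF 1 D x i + b * CD_dF 2 D x i + c * CD_dF 3 D x i = 0"
    have q0: "a * (2 * x 0) = 0" using h[rule_format, of 0] by (simp add: CD_dF_def)
    have q1: "a * (- 4 * x 1) + b * (2 * x 1) = 0" using h[rule_format, of 1] by (simp add: CD_dF_def)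
    have q2: "a * (2 * x 2) + b * (- 4 * x 2) + c * (2 * x 2) = 0" using h[rule_format, of 2] by (simp add: CD_dF_def)
    have q3: "b * (2 * of_int D * x 3) + c * (- 4 * of_int D * x 3) = 0" using h[rule_format, of 3] by (simp add: CD_dF_def)
    have q4: "c * (2 * x 4) = 0" using h[rule_format, of 4] by (simp add: CD_dF_def eval_nat_numeral)
    have r0: "x 0 = 0 \<or> a = 0" using q0 two by auto
    have "x 1 * (2 * (b - 2 * a)) = 0" using q1 by (simp add: algebra_simps)
    hence "x 1 = 0 \<or> b - 2 * a = 0" using two by (simp only: mult_eq_0_iff) blast
    hence r1: "x 1 = 0 \<or> b = 2 * a" by simp
    have "x 2 * (2 * (a - 2 * b + c)) = 0" using q2 by (simp add: algebra_simps)
    hence r2: "x 2 = 0 \<or> a - 2 * b + c = 0" using two by (simp only: mult_eq_0_iff) blast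
    have "x 3 * (2 * of_int D * (b - 2 * c)) = 0" using q3 by (simp add: algebra_simps)
    hence "x 3 = 0 \<or> b - 2 * c = 0" using two dD by (simp only: mult_eq_0_iff) blast
    hence r3: "x 3 = 0 \<or> b = 2 * c" by simp
    have r4: "x 4 = 0 \<or> c = 0" using q4 two by auto
    show "a = 0 \<and> b = 0 \<and> c = 0"
      using r0 r1 r2 r3 r4 notwo two by (auto simp: algebra_simps)
  qed
qed

end
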